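(* Let $n\ge 2$. Let $\hat a_{i,i-1}>0$ and $\hat b_{i,i-1}\in\mathbb{R}$ for $2\le i\le n$, and for $1\le m\le k\le n$ put $\hat a_{k,m}:=\prod_{i=m+1}^{k}\hat a_{i,i-1}$ (so $\hat a_{k,k}=1$). Let $L_i\in\mathbb{R}$ ($2\le i\le n$) and $R_i\in\mathbb{R}$ ($1\le i\le n-1$) satisfy $L_i=\hat a_{i,i-1}R_{i-1}+\hat b_{i,i-1}$ for $2\le i\le n$, and $L_i\le R_i$ for $2\le i\le n-1$. Suppose $\hat a_{j,1}=\prod_{i=2}^{j}\hat a_{i,i-1}\ge 1$ for all $2\le j\le n$. Then $$\sum_{i=2}^{n}\bigl(L_i-R_{i-1}\bigr)\le \frac{\hat a_{n,1}-1}{\hat a_{n,1}}\,L_n+\sum_{i=2}^{n}\frac{\hat b_{i,i-1}}{\hat a_{i,1}}.$$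
   Context: Setting: a timing packet traverses a chain of nodes $1,2,\ldots,n$. Node $i$ ($2\le i\le n$) records a receive time-stamp $L_i=\tau^{i,l}(t_{i,l})$ and node $i$ ($1\le i\le n-1$) a send time-stamp $R_i=\tau^{i,r}(t_{i,r})$, where the "left" and "right" clocks of intermediate nodes are arbitrary functions. The numbers $\hat a_{i,i-1},\hat b_{i,i-1}$ are the declared relative skews and offsets between adjacent nodes; the relation $L_i=\hat a_{i,i-1}R_{i-1}+\hat b_{i,i-1}$ is the skew-consistency condition, and $L_i\le R_i$ expresses causality (a node cannot forward before receiving). *)

theory Defs
  imports Complex_Main
begin

text \<open>a i stands for the relative skew between nodes i and i-1 (for 2 <= i <= n).
  The cumulative skew from node m to node k (m <= k) is the product over i = m+1..k.\<close>
definition ahat :: "(nat \<Rightarrow> real) \<Rightarrow> nat \<Rightarrow> nat \<Rightarrow> real" where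
  "ahat a k m = (\<Prod>i = m + 1..k. a i)"

end

theory Submission
  imports Defs
begin

lemma ahat_Suc: "1 \<le> m \<Longrightarrow> ahat a (Suc m) 1 = ahat a m 1 * a (Suc m)"
  unfolding ahat_def by (simp add: prod.nat_ivl_Suc' mult.commute)

lemma ahat_pos: "(\<And>i. 2 \<le> i \<Longrightarrow> i \<le> m \<Longrightarrow> a i > 0) \<Longrightarrow> ahat a m 1 > 0"
  unfolding ahat_def by (rule prod_pos) auto

theorem lemma1:
  fixes n :: nat and a b L R :: "nat \<Rightarrow> real"
  assumes n2: "n \<ge> 2"
    and apos: "\<And>i. 2 \<le> i \<Longrightarrow> i \<le> n \<Longrightarrow> a i > 0"
    and skew: "\<And>i. 2 \<le> i \<Longrightarrow> i \<le> n \<Longrightarrow> L i = a i * R (i - 1) + b i"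
    and caus: "\<And>i. 2 \<le> i \<Longrightarrow> i \<le> n - 1 \<Longrightarrow> L i \<le> R i"
    and ge1: "\<And>j. 2 \<le> j \<Longrightarrow> j \<le> n \<Longrightarrow> ahat a j 1 \<ge> 1"
  shows "(\<Sum>i = 2..n. L i - R (i - 1))
           \<le> (ahat a n 1 - 1) / ahat a n 1 * L n + (\<Sum>i = 2..n. b i / ahat a i 1)"
proof -
  have "m \<le> n \<Longrightarrow> (\<Sum>i = 2..m. L i - R (i - 1))
           \<le> (ahat a m 1 - 1) / ahat a m 1 * L m + (\<Sum>i = 2..m. b i / ahat a i 1)"
    if "2 \<le> m" for m
    using that
  proof (induction m rule: dec_induct)
    case base
    have a2: "a 2 > 0" using apos n2 by auto
    have h: "ahat a 2 1 = a 2" unfolding ahat_def by (simp add: numeral_2_eq_2)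
    have "L 2 = a 2 * R 1 + b 2" using skew[of 2] n2 by simp
    moreover have "(\<Sum>i = 2..2. L i - R (i - 1)) = L 2 - R 1" by simp
    moreover have "(\<Sum>i = 2..2. b i / ahat a i 1) = b 2 / a 2" using h by simp
    moreover have "L 2 - R 1 \<le> (a 2 - 1) / a 2 * L 2 + b 2 / a 2"
      using a2 \<open>L 2 = a 2 * R 1 + b 2\<close> by (simp add: field_simps)
    ultimately show ?case by (simp only: h)
  next
    case (step m)
    let ?A = "ahat a m 1"
    have Apos: "?A > 0" using ahat_pos[of m a] apos step by auto
    have A1: "?A \<ge> 1" using ge1 step by auto
    have aS: "a (Suc m) > 0" using apos step by auto
    have AS: "ahat a (Suc m) 1 = ?A * a (Suc m)" using ahat_Suc step by auto
    have sk: "L (Suc m) = a (Suc m) * R m + b (Suc m)" using skew[of "Suc m"] step by auto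
    have c: "L m \<le> R m" using caus[of m] step by auto
    have IH: "(\<Sum>i = 2..m. L i - R (i - 1))
           \<le> (?A - 1) / ?A * L m + (\<Sum>i = 2..m. b i / ahat a i 1)" using step by auto
    have key: "(?A - 1) / ?A * L m - R m \<le> - R m / ?A"
    proof -
      have "(?A - 1) * (L m - R m) \<le> 0" using A1 c by (simp add: mult_nonneg_nonpos)
      then have "(?A - 1) * (L m - R m) / ?A \<le> 0" using Apos by (simp add: divide_nonpos_pos)
      moreover have "(?A - 1) / ?A * L m - R m - (- R m / ?A) = (?A - 1) * (L m - R m) / ?A"
        using Apos by (simp add: field_simps)
      ultimately show ?thesis by linarith
    qed
    have eq: "(ahat a (Suc m) 1 - 1) / ahat a (Suc m) 1 * L (Suc m) + b (Suc m) / ahat a (Suc m) 1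
        = L (Suc m) - R m / ?A"
      using Apos aS unfolding AS sk by (simp add: field_simps)
    have s1: "(\<Sum>i = 2..Suc m. L i - R (i - 1)) = (\<Sum>i = 2..m. L i - R (i - 1)) + (L (Suc m) - R m)"
      using step by (simp add: sum.nat_ivl_Suc')
    have s2: "(\<Sum>i = 2..Suc m. b i / ahat a i 1) = (\<Sum>i = 2..m. b i / ahat a i 1) + b (Suc m) / ahat a (Suc m) 1"
      using step by (simp add: sum.nat_ivl_Suc')
    show ?case unfolding s1 s2 using IH key eq by linarith
  qed
  then show ?thesis using n2 by auto
qed

end
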